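(* Let $A$ be a commutative unital ring of characteristic $0$, $n\ge4$, $k\in\{3,\ldots,n-1\}$ and $(b_1,\ldots,b_k)\in A^k$. Let $s=(1_A,n_A-2_A,1_A,2_A,\ldots,2_A)\in A^n$ (last $n-3$ entries equal to $2_A$). Then $(b_1,\ldots,b_k)$ can be used to reduce $s$ (i.e. $(b_1,\ldots,b_k)$ is a $\lambda$-quiddity over $A$ and there exists $(c_1,\ldots,c_{n+2-k})\in A^{n+2-k}$ with $s\sim(c_1,\ldots,c_{n+2-k})\oplus(b_1,\ldots,b_k)$) if and only if $(b_1,\ldots,b_k)=(k_A-2_A,1_A,2_A,\ldots,2_A,1_A)$ or $(b_1,\ldots,b_k)=(1_A,2_A,\ldots,2_A,1_A,k_A-2_A)$, where in each case the number of entries equal to $2_A$ is $k-3$ (possibly zero).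
   Context: $k_A=k\cdot1_A$ for an integer $k$. For $a_1,\ldots,a_n\in A$, $M_n(a_1,\ldots,a_n)=\begin{pmatrix}a_n&-1\\1&0\end{pmatrix}\cdots\begin{pmatrix}a_1&-1\\1&0\end{pmatrix}$. An $n$-tuple $(a_1,\ldots,a_n)\in A^n$ is a $\lambda$-quiddity over $A$ if $M_n(a_1,\ldots,a_n)=\pm\mathrm{Id}$. For $(a_1,\ldots,a_n)\in A^n$, $(b_1,\ldots,b_m)\in A^m$, define $(a_1,\ldots,a_n)\oplus(b_1,\ldots,b_m)=(a_1+b_m,a_2,\ldots,a_{n-1},a_n+b_1,b_2,\ldots,b_{m-1})$. Write $(a_1,\ldots,a_n)\sim(b_1,\ldots,b_n)$ if $(b_1,\ldots,b_n)$ is obtained from $(a_1,\ldots,a_n)$ or from $(a_n,\ldots,a_1)$ by a cyclic permutation. *)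

theory Defs
  imports Main
begin

text \<open>2x2 matrices over A, written as (m11, m12, m21, m22).\<close>
type_synonym 'a mat2 = "'a \<times> 'a \<times> 'a \<times> 'a"

definition mmul2 :: "'a::comm_ring_1 mat2 \<Rightarrow> 'a mat2 \<Rightarrow> 'a mat2" where
  "mmul2 X Y = (case X of (a, b, c, d) \<Rightarrow> case Y of (e, f, g, h) \<Rightarrow>
     (a*e + b*g, a*f + b*h, c*e + d*g, c*f + d*h))"

definition id2 :: "'a::comm_ring_1 mat2" where
  "id2 = (1, 0, 0, 1)"

definition neg_id2 :: "'a::comm_ring_1 mat2" where
  "neg_id2 = (-1, 0, 0, -1)"

definition step_mat :: "'a::comm_ring_1 \<Rightarrow> 'a mat2" where
  "step_mat a = (a, -1, 1, 0)"

text \<open>M_n(a_1,...,a_n) = step(a_n) * ... * step(a_1).\<close>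
definition Mn :: "'a::comm_ring_1 list \<Rightarrow> 'a mat2" where
  "Mn xs = foldl (\<lambda>acc a. mmul2 (step_mat a) acc) id2 xs"

definition lambda_quiddity :: "'a::comm_ring_1 list \<Rightarrow> bool" where
  "lambda_quiddity xs \<longleftrightarrow> Mn xs = id2 \<or> Mn xs = neg_id2"

text \<open>(a_1..a_n) \<oplus> (b_1..b_m) = (a_1+b_m, a_2..a_{n-1}, a_n+b_1, b_2..b_{m-1}).\<close>
definition oplus :: "'a::comm_ring_1 list \<Rightarrow> 'a list \<Rightarrow> 'a list" where
  "oplus as bs =
     [hd as + last bs] @ take (length as - 2) (drop 1 as) @ [last as + hd bs]
     @ take (length bs - 2) (drop 1 bs)"

definition equiv_tuple :: "'a list \<Rightarrow> 'a list \<Rightarrow> bool" where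
  "equiv_tuple as bs \<longleftrightarrow> (\<exists>i. bs = rotate i as \<or> bs = rotate i (rev as))"

definition reduces :: "'a::comm_ring_1 list \<Rightarrow> 'a list \<Rightarrow> bool" where
  "reduces bs s \<longleftrightarrow> lambda_quiddity bs \<and>
     (\<exists>cs. length cs = length s + 2 - length bs \<and> equiv_tuple s (oplus cs bs))"

end

theory Submission
  imports Defs
begin

lemma mmul2_assoc: "mmul2 (mmul2 A B) C = mmul2 A (mmul2 B C)"
  by (cases A; cases B; cases C) (simp add: mmul2_def algebra_simps)

lemma Mn_Nil[simp]: "Mn [] = id2" by (simp add: Mn_def)

lemma Mn_snoc: "Mn (xs @ [a]) = mmul2 (step_mat a) (Mn xs)"
  by (simp add: Mn_def)

lemma mmul2_id2[simp]: "mmul2 A id2 = A" "mmul2 id2 A = A"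
  by (cases A; simp add: mmul2_def id2_def)+

lemma Mn_append: "Mn (xs @ ys) = mmul2 (Mn ys) (Mn xs)"
proof (induction ys rule: rev_induct)
  case Nil then show ?case by simp
next
  case (snoc y ys)
  then show ?case by (simp add: Mn_snoc mmul2_assoc flip: append_assoc)
qed

lemma Mn_Cons: "Mn (a # xs) = mmul2 (Mn xs) (step_mat a)"
  using Mn_append[of "[a]" xs] Mn_snoc[of "[]" a] by simp

lemma Mn_rep2: "Mn (replicate j (2::'a::comm_ring_1)) = (of_nat j + 1, - of_nat j, of_nat j, 1 - of_nat j)"
proof (induction j)
  case 0 then show ?case by (simp add: id2_def)
next
  case (Suc j)
  have "replicate (Suc j) (2::'a) = replicate j 2 @ [2]" by (simp add: replicate_append_same)
  then show ?case using Suc by (simp add: Mn_snoc mmul2_def step_mat_def algebra_simps)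
qed

lemma Mn_1rep: "Mn ((1::'a::comm_ring_1) # replicate j 2) = (1, -(of_nat j + 1), 1, - of_nat j)"
  by (simp add: Mn_Cons Mn_rep2 mmul2_def step_mat_def algebra_simps)

lemma Mn_rep1: "Mn (replicate j (2::'a::comm_ring_1) @ [1]) = (1, -1, of_nat j + 1, - of_nat j)"
  by (simp add: Mn_snoc Mn_rep2 mmul2_def step_mat_def algebra_simps)

lemma Mn_mid: "Mn (b1 # w @ [bk]) = mmul2 (step_mat bk) (mmul2 (Mn w) (step_mat b1))"
  by (simp add: Mn_snoc Mn_Cons flip: append_Cons)

lemma quid_mid:
  assumes "lambda_quiddity (b1 # w @ [bk])" "Mn w = (p,q,r,t)"
  shows "(p = 1 \<and> b1 = -q \<and> bk = r) \<or> (p = -1 \<and> b1 = q \<and> bk = -r)"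
proof -
  have M: "Mn (b1 # w @ [bk]) = (bk*(p*b1+q) - (r*b1+t), -bk*p + r, p*b1+q, -p)"
    by (simp add: Mn_mid assms(2) mmul2_def step_mat_def algebra_simps)
  from assms(1) show ?thesis unfolding lambda_quiddity_def M id2_def neg_id2_def
  proof
    assume h: "(bk*(p*b1+q) - (r*b1+t), -bk*p + r, p*b1+q, -p) = (1, 0, 0, 1)"
    then have "p = -1" by (simp add: minus_equation_iff)
    moreover from h this have "b1 = q" by (simp add: algebra_simps)
    moreover from h \<open>p = -1\<close> have "bk = -r" by (simp add: algebra_simps eq_neg_iff_add_eq_0)
    ultimately show ?thesis by simp
  next
    assume h: "(bk*(p*b1+q) - (r*b1+t), -bk*p + r, p*b1+q, -p) = (-1, 0, 0, -1)"
    then have "p = 1" by simp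
    with h show ?thesis by (simp add: algebra_simps eq_neg_iff_add_eq_0)
  qed
qed

lemma one_ne_neg_one: "(1::'a::{comm_ring_1,ring_char_0}) \<noteq> -1"
proof
  assume "(1::'a) = -1"
  then have "(of_nat 2::'a) = 0" by (simp add: eq_neg_iff_add_eq_0)
  then show False by simp
qed

lemma of_nat_ne_1: "N \<ge> 2 \<Longrightarrow> (of_nat N::'a::{comm_ring_1,ring_char_0}) \<noteq> 1"
  by (metis of_nat_1 of_nat_eq_iff numeral_le_one_iff semiring_norm(69) order.trans)

lemma of_nat_ne_m1: "(of_nat N::'a::{comm_ring_1,ring_char_0}) \<noteq> -1"
proof
  assume "(of_nat N::'a) = -1"
  then have "(of_nat (N+1)::'a) = 0" by simp
  then show False by (simp only: of_nat_eq_0_iff)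
qed


lemma xw0: "fst (Mn [x]) = x"
  by (simp add: Mn_snoc[of "[]", simplified] mmul2_def step_mat_def id2_def)

lemma xw1: "fst (Mn (replicate a (2::'a::comm_ring_1) @ [1, x])) = x - of_nat a - 1"
proof -
  have "replicate a (2::'a) @ [1, x] = (replicate a 2 @ [1]) @ [x]" by simp
  then show ?thesis by (simp only: Mn_snoc Mn_rep1) (simp add: Mn_rep2 mmul2_def step_mat_def algebra_simps)
qed

lemma xw2: "fst (Mn (x # (1::'a::comm_ring_1) # replicate b 2)) = x - of_nat b - 1"
  by (simp only: Mn_Cons Mn_1rep) (simp add: Mn_rep2 Mn_Cons mmul2_def step_mat_def id2_def algebra_simps)

lemma xw3: "fst (Mn (replicate a (2::'a::comm_ring_1) @ [1, x, 1] @ replicate b 2)) = x - of_nat a - of_nat b - 2"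
proof -
  have "replicate a (2::'a) @ [1, x, 1] @ replicate b 2 = (replicate a 2 @ [1]) @ [x] @ (1 # replicate b 2)" by simp
  then show ?thesis by (simp only: Mn_append Mn_rep1 Mn_1rep Mn_snoc[of "[]", simplified])
      (simp add: Mn_rep2 mmul2_def step_mat_def id2_def algebra_simps)
qed


lemma window:
  fixes n c L :: nat
  defines "s \<equiv> [1, of_nat n - 2, 1] @ replicate (n-3) (2::'a::comm_ring_1)"
  assumes n4: "n \<ge> 4" and cn: "c < n" and L1: "1 \<le> L" and Ln: "L \<le> n - 3"
  shows "take L (rotate c s) = 1 # replicate (L-1) 2 \<or> take L (rotate c s) = replicate (L-1) 2 @ [1]
     \<or> (\<exists>N\<ge>2. fst (Mn (take L (rotate c s))) = of_nat N)"
proof -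
  let ?x = "of_nat n - 2 :: 'a"
  have len: "length s = n" using n4 by (simp add: s_def)
  have rot: "rotate c s = drop c s @ take c s" using cn by (simp add: rotate_drop_take len)
  consider "c = 0" | "c = 1" | "c = 2" | "c \<ge> 3" by linarith
  then show ?thesis
  proof cases
    case 1
    then have r: "rotate c s = s" by simp
    consider "L = 1" | "L = 2" | j where "L = j + 3" using L1 by atomize_elim presburger
    then show ?thesis
    proof cases
      case 1 then show ?thesis unfolding r by (simp add: s_def)
    next
      case 2
      obtain d where d: "n = d + 5" using Ln 2 by (intro that[of "n-5"]) simp
      have t: "take L (rotate c s) = replicate 0 2 @ [1, ?x]" unfolding r using 2 by (simp add: s_def d)
      show ?thesis unfolding t xw1 by (intro disjI2 exI[of _ "d+2"]) (simp add: d algebra_simps)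
    next
      case 3
      obtain d where d: "n = d + j + 6" using Ln 3 by (intro that[of "n-j-6"]) simp
      have t: "take L (rotate c s) = replicate 0 2 @ [1, ?x, 1] @ replicate j 2" unfolding r using 3 by (simp add: s_def d take_Cons')
      show ?thesis unfolding t xw3 by (intro disjI2 exI[of _ "d+2"]) (simp add: d algebra_simps)
    qed
  next
    case 2
    then have r: "rotate c s = [?x, 1] @ replicate (n-3) 2 @ [1]" using rot by (simp add: s_def)
    consider "L = 1" | j where "L = j + 2" using L1 by atomize_elim presburger
    then show ?thesis
    proof cases
      case 1
      obtain d where d: "n = d + 4" using n4 by (intro that[of "n-4"]) simp
      have t: "take L (rotate c s) = [?x]" using 1 by (simp add: r)
      show ?thesis unfolding t xw0 by (intro disjI2 exI[of _ "d+2"]) (simp add: d algebra_simps)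
    next
      case 2
      obtain d where d: "n = d + j + 5" using Ln 2 by (intro that[of "n-j-5"]) simp
      have tr: "take j (replicate (n-3) 2 @ [1]) = replicate j (2::'a)" using d by (simp only: take_append take_replicate) (simp add: min_def)
      have t: "take L (rotate c s) = ?x # 1 # replicate j 2" using 2 tr by (simp add: r)
      show ?thesis unfolding t xw2 by (intro disjI2 exI[of _ "d+2"]) (simp add: d algebra_simps)
    qed
  next
    case 3
    then have r: "rotate c s = [1] @ replicate (n-3) 2 @ [1, ?x]" using rot by (simp add: s_def)
    obtain j where j: "L = Suc j" using L1 by (intro that[of "L-1"]) simp
    have tr: "take j (replicate (n-3) 2 @ [1, ?x]) = replicate j 2" using j Ln by (simp only: take_append take_replicate) (simp add: min_def)
    have "take L (rotate c s) = 1 # replicate (L-1) 2" using j tr by (simp add: r)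
    then show ?thesis by simp
  next
    case 4
    obtain e where e: "c = e + 3" using 4 by (intro that[of "c-3"]) simp
    obtain a where a: "n = a + e + 3" "a \<ge> 1" using cn e by (intro that[of "n-c"]) simp_all
    have r: "rotate c s = replicate a 2 @ [1, ?x, 1] @ replicate e 2" unfolding rot by (simp add: s_def e a take_Cons' drop_Cons')
    consider "L \<le> a" | "L = a + 1" | "L = a + 2" | j where "L = a + 3 + j" using L1 by atomize_elim presburger
    then show ?thesis
    proof cases
      case 1
      have t: "take L (rotate c s) = replicate L 2" using 1 by (simp add: r)
      show ?thesis unfolding t Mn_rep2 using L1 by (intro disjI2 exI[of _ "L+1"]) simp
    next
      case 2
      have t: "take L (rotate c s) = replicate a 2 @ [1]" using 2 by (simp add: r)
      then show ?thesis using 2 by simp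
    next
      case 3
      obtain d where d: "e = d + 2" using Ln 3 a by (intro that[of "e-2"]) simp
      have t: "take L (rotate c s) = replicate a 2 @ [1, ?x]" using 3 by (simp add: r)
      show ?thesis unfolding t xw1 by (intro disjI2 exI[of _ "d+2"]) (simp add: a d algebra_simps)
    next
      case 4
      obtain d where d: "e = d + j + 3" using Ln 4 a by (intro that[of "e-j-3"]) simp
      have t: "take L (rotate c s) = replicate a 2 @ [1, ?x, 1] @ replicate j 2" using 4 by (simp add: r d take_Cons')
      show ?thesis unfolding t xw3 by (intro disjI2 exI[of _ "d+2"]) (simp add: a d algebra_simps)
    qed
  qed
qed


lemma rev_s: "n \<ge> 4 \<Longrightarrow> rev ([1, x, 1] @ replicate (n - 3) (2::'a::comm_ring_1)) = rotate 3 ([1, x, 1] @ replicate (n - 3) 2)"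
  by (simp add: rotate_drop_take)

lemma split3: "length b = k \<Longrightarrow> k \<ge> 3 \<Longrightarrow> \<exists>b1 w bk. b = b1 # w @ [bk] \<and> length w = k - 2"
proof -
  assume "length b = k" "k \<ge> 3"
  then obtain b1 b' where b: "b = b1 # b'" "b' \<noteq> []" by (cases b; cases "tl b") auto
  then have "b' = butlast b' @ [last b']" by simp
  with b \<open>length b = k\<close> show ?thesis by (intro exI[of _ b1] exI[of _ "butlast b'"] exI[of _ "last b'"]) auto
qed

lemma oplus_split:
  assumes "length cs = m" "m \<ge> 2"
  shows "oplus cs (b1 # w @ [bk]) = ([hd cs + bk] @ take (m-2) (drop 1 cs) @ [last cs + b1]) @ w"
    and "length ([hd cs + bk] @ take (m-2) (drop 1 cs) @ [last cs + b1]) = m"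
  using assms by (auto simp add: oplus_def)

theorem lemma4p9:
  fixes b :: "'a::{comm_ring_1, ring_char_0} list" and n k :: nat
  assumes "n \<ge> 4" and "3 \<le> k" and "k \<le> n - 1" and "length b = k"
  shows "reduces b ([1, of_nat n - 2, 1] @ replicate (n - 3) 2)
    \<longleftrightarrow> (b = [of_nat k - 2, 1] @ replicate (k - 3) 2 @ [1]
         \<or> b = [1] @ replicate (k - 3) 2 @ [1, of_nat k - 2])"
proof -
  note n4 = assms(1) and k3 = assms(2) and kn = assms(3) and lb = assms(4)
  define s where "s = [1, of_nat n - 2, 1] @ replicate (n - 3) (2::'a)"
  have ls: "length s = n" using n4 by (simp add: s_def)
  obtain j where kj: "k = j + 3" using k3 by (intro that[of "k-3"]) simp
  obtain d where nd: "n = j + 4 + d" using kn kj n4 by (intro that[of "n-j-4"]) simp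
  have ofk: "(of_nat k - 2 :: 'a) = of_nat j + 1" by (simp add: kj algebra_simps)
  have rs: "rev s = rotate 3 s" unfolding s_def by (rule rev_s[OF n4])
  show ?thesis unfolding s_def[symmetric]
  proof
    assume R: "reduces b s"
    then obtain cs where q: "lambda_quiddity b" and lc: "length cs = n + 2 - k"
      and e: "equiv_tuple s (oplus cs b)" using ls lb by (auto simp: reduces_def)
    obtain i where oi: "oplus cs b = rotate i s"
    proof -
      from e obtain i where "oplus cs b = rotate i s \<or> oplus cs b = rotate i (rev s)"
        by (auto simp: equiv_tuple_def)
      then show thesis
      proof
        assume "oplus cs b = rotate i (rev s)"
        then have "oplus cs b = rotate (i+3) s" using rs by (simp only: rotate_rotate)
        then show thesis by (rule that)
      qed (rule that)
    qed
    obtain b1 w bk where bw: "b = b1 # w @ [bk]" and lw: "length w = k - 2"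
      using split3[OF lb k3] by blast
    define m where "m = n + 2 - k"
    have m2: "m \<ge> 2" unfolding m_def using kn by simp
    define X where "X = [hd cs + bk] @ take (m-2) (drop 1 cs) @ [last cs + b1]"
    have oX: "oplus cs b = X @ w" and lX: "length X = m"
      unfolding X_def bw using oplus_split[OF lc[folded m_def] m2] by blast+
    have "w @ X = rotate m (X @ w)" using rotate_append[of X w] lX by simp
    also have "\<dots> = rotate ((m + i) mod n) s" using oi oX ls by (simp add: rotate_rotate rotate_conv_mod[of "m+i" s])
    finally have wX: "w @ X = rotate ((m + i) mod n) s" .
    have wt: "w = take (k-2) (rotate ((m + i) mod n) s)" using wX lw by (metis append_eq_conv_conj)
    have cn: "(m + i) mod n < n" using n4 by simp
    have L1: "1 \<le> k - 2" and Ln: "k - 2 \<le> n - 3" using k3 kn by simp_all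
    have W: "w = 1 # replicate (k-2-1) 2 \<or> w = replicate (k-2-1) 2 @ [1] \<or> (\<exists>N\<ge>2. fst (Mn w) = (of_nat N::'a))"
      unfolding wt s_def by (rule window[OF n4 cn L1 Ln])
    then consider "w = 1 # replicate (k-2-1) 2" | "w = replicate (k-2-1) 2 @ [1]" | N where "N \<ge> 2" "fst (Mn w) = of_nat N"
      by auto
    then show "b = [of_nat k - 2, 1] @ replicate (k - 3) 2 @ [1] \<or> b = [1] @ replicate (k - 3) 2 @ [1, of_nat k - 2]"
    proof cases
      case 1
      then have w: "w = 1 # replicate j 2" by (simp add: kj)
      have "(1 = 1 \<and> b1 = -(-(of_nat j + 1)) \<and> bk = 1) \<or> ((1::'a) = -1 \<and> b1 = -(of_nat j + 1) \<and> bk = -1)"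
        using quid_mid[OF q[unfolded bw], of 1 "-(of_nat j + 1)" 1 "- of_nat j"] w Mn_1rep[where 'a='a, of j] by simp
      then have "b1 = of_nat j + 1" "bk = 1" using one_ne_neg_one by auto
      then show ?thesis using bw w ofk kj by simp
    next
      case 2
      then have w: "w = replicate j 2 @ [1]" by (simp add: kj)
      have "(1 = 1 \<and> b1 = -(-1) \<and> bk = of_nat j + 1) \<or> ((1::'a) = -1 \<and> b1 = -1 \<and> bk = -(of_nat j + 1))"
        using quid_mid[OF q[unfolded bw], of 1 "-1" "of_nat j + 1" "- of_nat j"] w Mn_rep1[where 'a='a, of j] by simp
      then have "b1 = 1" "bk = of_nat j + 1" using one_ne_neg_one by auto
      then show ?thesis using bw w ofk kj by simp
    next
      case 3
      obtain p qq r t where M: "Mn w = (p, qq, r, t)" by (cases "Mn w") auto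
      have "p = 1 \<or> p = -1" using quid_mid[OF q[unfolded bw] M] by auto
      moreover have "p = of_nat N" using 3 M by simp
      ultimately show ?thesis using of_nat_ne_1[OF 3(1), where 'a='a] of_nat_ne_m1[of N, where 'a='a] by auto
    qed
  next
    assume "b = [of_nat k - 2, 1] @ replicate (k - 3) 2 @ [1] \<or> b = [1] @ replicate (k - 3) 2 @ [1, of_nat k - 2]"
    then show "reduces b s"
    proof
      assume b: "b = [of_nat k - 2, 1] @ replicate (k - 3) 2 @ [1]"
      have bw: "b = (of_nat j + 1) # (1 # replicate j 2) @ [1]" using b ofk kj by simp
      have q: "lambda_quiddity b" unfolding bw lambda_quiddity_def Mn_mid Mn_1rep
        by (simp add: mmul2_def step_mat_def neg_id2_def algebra_simps)
      define cs where "cs = [1] @ replicate d 2 @ [1, of_nat n - of_nat k :: 'a]"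
      have lc: "length cs = n + 2 - k" using nd kj by (simp add: cs_def)
      have "oplus cs b = [2] @ replicate d 2 @ [1, of_nat n - 2, 1] @ replicate j 2"
        unfolding bw by (simp add: oplus_def cs_def nd kj algebra_simps)
      also have "\<dots> = rotate k s"
      proof -
        have e: "n - 3 = j + (d+1)" using nd by simp
        have sA: "s = ([1, of_nat n - 2, 1] @ replicate j 2) @ replicate (d+1) 2"
          unfolding s_def e replicate_add by simp
        have A: "length ([1, of_nat n - 2, 1] @ replicate j (2::'a)) = k" using kj by simp
        have "rotate k s = replicate (d+1) 2 @ [1, of_nat n - 2, 1] @ replicate j 2"
          unfolding sA by (metis A rotate_append)
        then show ?thesis by simp
      qed
      finally have "equiv_tuple s (oplus cs b)" unfolding equiv_tuple_def by metis
      then show ?thesis using q lc ls lb unfolding reduces_def by auto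
    next
      assume b: "b = [1] @ replicate (k - 3) 2 @ [1, of_nat k - 2]"
      have bw: "b = 1 # (replicate j 2 @ [1]) @ [of_nat j + 1]" using b ofk kj by simp
      have q: "lambda_quiddity b" unfolding bw lambda_quiddity_def Mn_mid Mn_rep1
        by (simp add: mmul2_def step_mat_def neg_id2_def algebra_simps)
      define cs where "cs = [of_nat n - of_nat k, 1] @ replicate d 2 @ [1 :: 'a]"
      have lc: "length cs = n + 2 - k" using nd kj by (simp add: cs_def)
      have "oplus cs b = [of_nat n - 2, 1] @ replicate d 2 @ [2] @ replicate j 2 @ [1]"
        unfolding bw by (simp add: oplus_def cs_def nd kj algebra_simps)
      also have "\<dots> = rotate 1 s"
      proof -
        have e: "n - 3 = d + (1 + j)" using nd by simp
        have "s = [1] @ ([of_nat n - 2, 1] @ replicate d 2 @ [2] @ replicate j 2)"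
          unfolding s_def e replicate_add by simp
        then have "rotate 1 s = ([of_nat n - 2, 1] @ replicate d 2 @ [2] @ replicate j 2) @ [1]"
          using rotate_append[of "[1::'a]"] by (metis list.size(3) list.size(4) One_nat_def add_0)
        then show ?thesis by simp
      qed
      finally have "equiv_tuple s (oplus cs b)" unfolding equiv_tuple_def by metis
      then show ?thesis using q lc ls lb unfolding reduces_def by auto
    qed
  qed
qed

end
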